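(* Let $\Psi:\mathbb{R}^n\to\mathbb{R}$ be differentiable with $\|\nabla\Psi(y)-\nabla\Psi(x)\|\le L_\Psi\|y-x\|$ for all $x,y$ (with $L_\Psi>0$), bounded from below, and let $\Psi^*=\inf_{x\in\mathbb{R}^n}\Psi(x)$. Consider the accelerated gradient (AG) method: given $x_0\in\mathbb{R}^n$, parameters $\{\alpha_k\}$ with $\alpha_1=1$, $\alpha_k\in(0,1)$ for $k\ge2$, $\{\beta_k>0\}$ and $\{\lambda_k>0\}$, set $x^{ag}_0=x_0$ and for $k=1,2,\ldots$ $$x^{md}_k=(1-\alpha_k)x^{ag}_{k-1}+\alpha_kx_{k-1},\quad x_k=x_{k-1}-\lambda_k\nabla\Psi(x^{md}_k),\quad x^{ag}_k=x^{md}_k-\beta_k\nabla\Psi(x^{md}_k).$$ Let $\Gamma_1=1$ and $\Gamma_k=(1-\alpha_k)\Gamma_{k-1}$ for $k\ge2$. (a) Let $N\ge1$. If for all $k=1,\ldots,N$ $$C_k:=1-L_\Psi\lambda_k-\frac{L_\Psi(\lambda_k-\beta_k)^2}{2\alpha_k\Gamma_k\lambda_k}\Big(\sum_{\tau=k}^N\Gamma_\tau\Big)>0,$$ then $$\min_{k=1,\ldots,N}\|\nabla\Psi(x^{md}_k)\|^2\le\frac{\Psi(x_0)-\Psi^*}{\sum_{k=1}^N\lambda_kC_k}.$$ (b) Suppose in addition that $\Psi$ is convex and that an optimal solution $x^*$ of $\min_{x\in\mathbb{R}^n}\Psi(x)$ exists. If $\alpha_k\lambda_k\le\beta_k<1/L_\Psi$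 for all $k$ and $\frac{\alpha_1}{\lambda_1\Gamma_1}\ge\frac{\alpha_2}{\lambda_2\Gamma_2}\ge\cdots$, then for any $N\ge1$, $$\min_{k=1,\ldots,N}\|\nabla\Psi(x^{md}_k)\|^2\le\frac{\|x_0-x^*\|^2}{\lambda_1\sum_{k=1}^N\Gamma_k^{-1}\beta_k(1-L_\Psi\beta_k)},\qquad \Psi(x^{ag}_N)-\Psi(x^* )\le\frac{\Gamma_N\|x_0-x^*\|^2}{2\lambda_1}.$$
   Context: $\|\cdot\|$ is the Euclidean norm on $\mathbb{R}^n$. *)

theory Defs
  imports "HOL-Analysis.Analysis"
begin

end

theory Submission
  imports Defs "HOL-Analysis.Analysis"
begin

lemma line_deriv:
  fixes \<Psi> :: "'a::euclidean_space \<Rightarrow> real"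
  assumes grad: "\<And>z. (\<Psi> has_derivative (\<lambda>h. grad z \<bullet> h)) (at z)"
  shows "((\<lambda>t. \<Psi> (u + t *\<^sub>R d)) has_real_derivative (grad (u + t *\<^sub>R d) \<bullet> d)) (at t)"
proof -
  have l: "((\<lambda>t. u + t *\<^sub>R d) has_derivative (\<lambda>h. h *\<^sub>R d)) (at t)"
    by (auto intro!: derivative_eq_intros)
  have "((\<lambda>t. \<Psi> (u + t *\<^sub>R d)) has_derivative (\<lambda>h. grad (u + t *\<^sub>R d) \<bullet> (h *\<^sub>R d))) (at t)"
    using has_derivative_compose[OF l grad] by (simp add: o_def)
  moreover have "(\<lambda>h. grad (u + t *\<^sub>R d) \<bullet> (h *\<^sub>R d)) = (*) (grad (u + t *\<^sub>R d) \<bullet> d)"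
    by (auto simp: mult.commute)
  ultimately show ?thesis by (simp add: has_field_derivative_def)
qed

lemma smooth_ub:
  fixes \<Psi> :: "'a::euclidean_space \<Rightarrow> real"
  assumes grad: "\<And>z. (\<Psi> has_derivative (\<lambda>h. grad z \<bullet> h)) (at z)"
    and Lpos: "L > 0"
    and Lip: "\<And>u v. norm (grad v - grad u) \<le> L * norm (v - u)"
  shows "\<Psi> v \<le> \<Psi> u + grad u \<bullet> (v - u) + L / 2 * (norm (v - u))^2"
proof -
  define d where "d = v - u"
  define \<phi> where "\<phi> t = \<Psi> (u + t *\<^sub>R d) - t * (grad u \<bullet> d) - L/2 * t^2 * (norm d)^2" for t
  have H: "\<exists>y. (\<phi> has_real_derivative y) (at t) \<and> y \<le> 0" if t: "0 \<le> t" "t \<le> 1" for t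
  proof -
    have D: "(\<phi> has_real_derivative (grad (u + t *\<^sub>R d) \<bullet> d - grad u \<bullet> d - L * t * (norm d)^2)) (at t)"
      unfolding \<phi>_def
      by (auto intro!: derivative_eq_intros line_deriv[OF grad])
    have "grad (u + t *\<^sub>R d) \<bullet> d - grad u \<bullet> d = (grad (u + t *\<^sub>R d) - grad u) \<bullet> d"
      by (simp add: inner_diff_left)
    also have "\<dots> \<le> norm (grad (u + t *\<^sub>R d) - grad u) * norm d"
      by (rule norm_cauchy_schwarz)
    also have "\<dots> \<le> (L * norm (t *\<^sub>R d)) * norm d"
      using Lip[where u=u and v="u + t *\<^sub>R d"] by (intro mult_right_mono) auto
    also have "\<dots> = L * t * (norm d)^2" using t by (simp add: power2_eq_square)
    finally show "\<exists>y. (\<phi> has_real_derivative y) (at t) \<and> y \<le> 0" using D by auto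
  qed
  have "\<phi> 0 \<ge> \<phi> 1"
    by (rule DERIV_nonpos_imp_nonincreasing[of 0 1 \<phi>]) (use H in auto)
  thus ?thesis unfolding \<phi>_def d_def by simp
qed

lemma convex_lb:
  fixes \<Psi> :: "'a::euclidean_space \<Rightarrow> real"
  assumes grad: "\<And>z. (\<Psi> has_derivative (\<lambda>h. grad z \<bullet> h)) (at z)"
    and cvx: "convex_on UNIV \<Psi>"
  shows "\<Psi> u + grad u \<bullet> (v - u) \<le> \<Psi> v"
proof -
  define d where "d = v - u"
  define h where "h t = \<Psi> (u + t *\<^sub>R d)" for t
  have ch: "convex_on UNIV h"
  proof (rule convex_onI)
    fix t x y :: real assume t: "0 < t" "t < 1"
    have eq: "u + ((1 - t) *\<^sub>R x + t *\<^sub>R y) *\<^sub>R d = (1 - t) *\<^sub>R (u + x *\<^sub>R d) + t *\<^sub>R (u + y *\<^sub>R d)"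
      by (simp add: algebra_simps)
    show "h ((1 - t) *\<^sub>R x + t *\<^sub>R y) \<le> (1 - t) * h x + t * h y"
      unfolding h_def eq by (rule convex_onD[OF cvx]) (use t in auto)
  qed simp
  have dd: "(h has_field_derivative (grad u \<bullet> d)) (at 0 within UNIV)"
    using line_deriv[OF grad, of u d 0] unfolding h_def by simp
  have "h 1 - h 0 \<ge> (grad u \<bullet> d) * (1 - 0)"
    by (rule convex_on_imp_above_tangent[OF ch connected_UNIV _ _ dd]) auto
  thus ?thesis by (simp add: h_def d_def)
qed

lemma normsq_convex:
  fixes p q :: "'a::real_normed_vector"
  assumes "0 \<le> a" "a \<le> 1"
  shows "(norm ((1 - a) *\<^sub>R p + a *\<^sub>R q))^2 \<le> (1 - a) * (norm p)^2 + a * (norm q)^2"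
proof -
  have "norm ((1 - a) *\<^sub>R p + a *\<^sub>R q) \<le> (1 - a) * norm p + a * norm q"
    using norm_triangle_ineq[of "(1 - a) *\<^sub>R p" "a *\<^sub>R q"] assms by simp
  hence "(norm ((1 - a) *\<^sub>R p + a *\<^sub>R q))^2 \<le> ((1 - a) * norm p + a * norm q)^2"
    by (intro power_mono) auto
  also have "\<dots> = (1 - a) * (norm p)^2 + a * (norm q)^2 - a * (1 - a) * (norm p - norm q)^2"
    by (simp add: power2_eq_square algebra_simps)
  also have "\<dots> \<le> (1 - a) * (norm p)^2 + a * (norm q)^2"
    using assms by simp
  finally show ?thesis .
qed

theorem theorem1:
  fixes \<Psi> :: "'a::euclidean_space \<Rightarrow> real"
    and grad :: "'a \<Rightarrow> 'a"
    and L :: real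
    and x0 :: 'a
    and x xmd xag :: "nat \<Rightarrow> 'a"
    and \<alpha> \<beta> lam \<Gamma> :: "nat \<Rightarrow> real"
  assumes grad: "\<And>z. (\<Psi> has_derivative (\<lambda>h. grad z \<bullet> h)) (at z)"
    and Lpos: "L > 0"
    and Lip: "\<And>u v. norm (grad v - grad u) \<le> L * norm (v - u)"
    and bdd: "bdd_below (range \<Psi>)"
    and a1: "\<alpha> 1 = 1"
    and ak: "\<And>k. k \<ge> 2 \<Longrightarrow> 0 < \<alpha> k \<and> \<alpha> k < 1"
    and bpos: "\<And>k. k \<ge> 1 \<Longrightarrow> \<beta> k > 0"
    and lpos: "\<And>k. k \<ge> 1 \<Longrightarrow> lam k > 0"
    and x_0: "x 0 = x0"
    and xag_0: "xag 0 = x0"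
    and xmd_def: "\<And>k. k \<ge> 1 \<Longrightarrow> xmd k = (1 - \<alpha> k) *\<^sub>R xag (k - 1) + \<alpha> k *\<^sub>R x (k - 1)"
    and x_def: "\<And>k. k \<ge> 1 \<Longrightarrow> x k = x (k - 1) - lam k *\<^sub>R grad (xmd k)"
    and xag_def: "\<And>k. k \<ge> 1 \<Longrightarrow> xag k = xmd k - \<beta> k *\<^sub>R grad (xmd k)"
    and G1: "\<Gamma> 1 = 1"
    and Gk: "\<And>k. k \<ge> 2 \<Longrightarrow> \<Gamma> k = (1 - \<alpha> k) * \<Gamma> (k - 1)"
  shows
    "(\<forall>N\<ge>1.
        (\<forall>k\<in>{1..N}. 1 - L * lam k
            - (L * (lam k - \<beta> k)^2 / (2 * \<alpha> k * \<Gamma> k * lam k)) * (\<Sum>\<tau>=k..N. \<Gamma> \<tau>) > 0)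
        \<longrightarrow> Min ((\<lambda>k. (norm (grad (xmd k)))^2) ` {1..N})
            \<le> (\<Psi> x0 - (INF z. \<Psi> z)) /
               (\<Sum>k=1..N. lam k * (1 - L * lam k
                  - (L * (lam k - \<beta> k)^2 / (2 * \<alpha> k * \<Gamma> k * lam k)) * (\<Sum>\<tau>=k..N. \<Gamma> \<tau>))))
     \<and>
     (convex_on UNIV \<Psi> \<longrightarrow>
      (\<forall>xs. (\<forall>z. \<Psi> xs \<le> \<Psi> z) \<longrightarrow>
        (\<forall>k\<ge>1. \<alpha> k * lam k \<le> \<beta> k \<and> \<beta> k < 1 / L) \<longrightarrow>
        (\<forall>k\<ge>1. \<alpha> (k + 1) / (lam (k + 1) * \<Gamma> (k + 1)) \<le> \<alpha> k / (lam k * \<Gamma> k)) \<longrightarrow>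
        (\<forall>N\<ge>1.
           Min ((\<lambda>k. (norm (grad (xmd k)))^2) ` {1..N})
             \<le> (norm (x0 - xs))^2 / (lam 1 * (\<Sum>k=1..N. \<beta> k * (1 - L * \<beta> k) / \<Gamma> k))
           \<and> \<Psi> (xag N) - \<Psi> xs \<le> \<Gamma> N * (norm (x0 - xs))^2 / (2 * lam 1))))" (is "?A \<and> ?B")
proof -
  define g where "g k = grad (xmd k)" for k
  have Gpos: "\<Gamma> k > 0" if "k \<ge> 1" for k
    using that
  proof (induction k)
    case 0 then show ?case by simp
  next
    case (Suc k)
    show ?case
    proof (cases "k = 0")
      case True then show ?thesis using G1 by simp
    next
      case False
      then have "\<Gamma> k > 0" using Suc by simp
      moreover have "\<Gamma> (Suc k) = (1 - \<alpha> (Suc k)) * \<Gamma> k" using Gk[of "Suc k"] False by simp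
      moreover have "\<alpha> (Suc k) < 1" using ak[of "Suc k"] False by simp
      ultimately show ?thesis by simp
    qed
  qed
  have apos: "0 < \<alpha> k \<and> \<alpha> k \<le> 1" if "k \<ge> 1" for k
    using a1 ak[of k] that by (cases "k = 1") auto
  have smooth: "\<Psi> v \<le> \<Psi> u + grad u \<bullet> (v - u) + L / 2 * (norm (v - u))^2" for u v
    by (rule smooth_ub[OF grad Lpos Lip])
  define e where "e k = xag k - x k" for k
  have e0: "e 0 = 0" using x_0 xag_0 by (simp add: e_def)
  have erec: "e k = (1 - \<alpha> k) *\<^sub>R e (k - 1) + (lam k - \<beta> k) *\<^sub>R g k" if "k \<ge> 1" for k
  proof -
    have "e k = xmd k - \<beta> k *\<^sub>R g k - (x (k - 1) - lam k *\<^sub>R g k)"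
      unfolding e_def g_def using xag_def[OF that] x_def[OF that] by simp
    also have "\<dots> = (1 - \<alpha> k) *\<^sub>R e (k - 1) + (lam k - \<beta> k) *\<^sub>R g k"
      unfolding xmd_def[OF that] e_def by (simp add: algebra_simps)
    finally show ?thesis .
  qed
  have mde: "xmd k - x (k - 1) = (1 - \<alpha> k) *\<^sub>R e (k - 1)" if "k \<ge> 1" for k
    using xmd_def[OF that] by (simp add: e_def algebra_simps)
  have eb1: "(norm (e k))^2 \<le> (1 - \<alpha> k) * (norm (e (k - 1)))^2 + (lam k - \<beta> k)^2 / \<alpha> k * (norm (g k))^2"
    if k: "k \<ge> 1" for k
  proof -
    have a: "0 < \<alpha> k" "\<alpha> k \<le> 1" using apos[OF k] by auto
    have "e k = (1 - \<alpha> k) *\<^sub>R e (k - 1) + \<alpha> k *\<^sub>R (((lam k - \<beta> k) / \<alpha> k) *\<^sub>R g k)"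
      using erec[OF k] a by simp
    hence "(norm (e k))^2 \<le> (1 - \<alpha> k) * (norm (e (k - 1)))^2 + \<alpha> k * (norm (((lam k - \<beta> k) / \<alpha> k) *\<^sub>R g k))^2"
      using normsq_convex[of "\<alpha> k" "e (k - 1)" "((lam k - \<beta> k) / \<alpha> k) *\<^sub>R g k"] a by simp
    also have "\<alpha> k * (norm (((lam k - \<beta> k) / \<alpha> k) *\<^sub>R g k))^2 = (lam k - \<beta> k)^2 / \<alpha> k * (norm (g k))^2"
      using a by (simp add: power2_eq_square field_simps)
    finally show ?thesis .
  qed
  define a where "a k = (lam k - \<beta> k)^2 / (\<Gamma> k * \<alpha> k) * (norm (g k))^2" for k
  define S where "S k = (\<Sum>\<tau>=1..k. a \<tau>)" for k
  have ann: "a k \<ge> 0" if "k \<ge> 1" for k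
    using Gpos[OF that] apos[OF that] by (simp add: a_def)
  have Snn: "S k \<ge> 0" for k
    unfolding S_def by (rule sum_nonneg) (use ann in auto)
  have S0: "S 0 = 0" by (simp add: S_def)
  have SSuc: "S (Suc k) = S k + a (Suc k)" for k by (simp add: S_def)
  have eb: "(norm (e k))^2 \<le> \<Gamma> k * S k" if "k \<ge> 1" for k
    using that
  proof (induction k)
    case 0 then show ?case by simp
  next
    case (Suc k)
    have G: "\<Gamma> (Suc k) > 0" using Gpos by simp
    have A: "\<alpha> (Suc k) > 0" using apos by simp
    show ?case
    proof (cases "k = 0")
      case True
      then show ?thesis using eb1[of 1] a1 G1 by (simp add: S_def a_def)
    next
      case False
      have IH: "(norm (e k))^2 \<le> \<Gamma> k * S k" using Suc False by simp
      have Gs: "\<Gamma> (Suc k) = (1 - \<alpha> (Suc k)) * \<Gamma> k" using Gk[of "Suc k"] False by simp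
      have a1': "\<alpha> (Suc k) < 1" using ak[of "Suc k"] False by simp
      have "(norm (e (Suc k)))^2 \<le> (1 - \<alpha> (Suc k)) * (norm (e k))^2 + (lam (Suc k) - \<beta> (Suc k))^2 / \<alpha> (Suc k) * (norm (g (Suc k)))^2"
        using eb1[of "Suc k"] by simp
      also have "\<dots> \<le> (1 - \<alpha> (Suc k)) * (\<Gamma> k * S k) + (lam (Suc k) - \<beta> (Suc k))^2 / \<alpha> (Suc k) * (norm (g (Suc k)))^2"
        using IH a1' by (intro add_right_mono mult_left_mono) auto
      also have "(lam (Suc k) - \<beta> (Suc k))^2 / \<alpha> (Suc k) * (norm (g (Suc k)))^2 = \<Gamma> (Suc k) * a (Suc k)"
        using G A by (simp add: a_def field_simps)
      also have "(1 - \<alpha> (Suc k)) * (\<Gamma> k * S k) = \<Gamma> (Suc k) * S k" using Gs by simp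
      finally show ?thesis by (simp add: SSuc distrib_left)
    qed
  qed
  have eprev: "(1 - \<alpha> k)^2 * (norm (e (k - 1)))^2 \<le> \<Gamma> k * S (k - 1)" if k: "k \<ge> 1" for k
  proof (cases "k = 1")
    case True then show ?thesis using a1 G1 S0 by simp
  next
    case False
    have k2: "k \<ge> 2" using k False by simp
    have Gs: "\<Gamma> k = (1 - \<alpha> k) * \<Gamma> (k - 1)" using Gk[OF k2] .
    have a': "0 < \<alpha> k" "\<alpha> k < 1" using ak[OF k2] by auto
    have G': "\<Gamma> (k - 1) > 0" using Gpos k2 by simp
    have "(1 - \<alpha> k)^2 * (norm (e (k - 1)))^2 \<le> (1 - \<alpha> k)^2 * (\<Gamma> (k - 1) * S (k - 1))"
      using eb[of "k - 1"] k2 by (intro mult_left_mono) auto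
    also have "\<dots> \<le> (1 - \<alpha> k) * (\<Gamma> (k - 1) * S (k - 1))"
      using a' G' Snn[of "k - 1"] by (intro mult_right_mono) (auto simp: power2_eq_square)
    finally show ?thesis using Gs by simp
  qed
  have stepa: "\<Psi> (x k) \<le> \<Psi> (x (k - 1)) - lam k * (1 - L * lam k) * (norm (g k))^2 + L / 2 * (\<Gamma> k * S (k - 1))"
    if k: "k \<ge> 1" for k
  proof -
    define u where "u = x (k - 1)"
    define gg where "gg = g k"
    define lk where "lk = lam k"
    define \<Delta> where "\<Delta> = grad u - gg"
    have lk: "lk > 0" using lpos[OF k] by (simp add: lk_def)
    have xk: "x k - u = - (lk *\<^sub>R gg)" using x_def[OF k] by (simp add: u_def lk_def gg_def g_def)
    have s1: "\<Psi> (x k) \<le> \<Psi> u + grad u \<bullet> (x k - u) + L / 2 * (norm (x k - u))^2" by (rule smooth)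
    have "grad u \<bullet> (x k - u) = - lk * (norm gg)^2 - lk * (\<Delta> \<bullet> gg)"
      unfolding xk \<Delta>_def by (simp add: inner_diff_left power2_norm_eq_inner algebra_simps)
    moreover have "(norm (x k - u))^2 = lk^2 * (norm gg)^2" unfolding xk using lk by (simp add: power_mult_distrib)
    moreover have "- (\<Delta> \<bullet> gg) \<le> norm \<Delta> * norm gg"
      using norm_cauchy_schwarz[of "-\<Delta>" gg] by simp
    ultimately have s2: "\<Psi> (x k) \<le> \<Psi> u - lk * (norm gg)^2 + lk * (norm \<Delta> * norm gg) + L / 2 * (lk^2 * (norm gg)^2)"
      using s1 lk mult_left_mono[of "- (\<Delta> \<bullet> gg)" "norm \<Delta> * norm gg" lk] by simp
    have amgm: "lk * (norm \<Delta> * norm gg) \<le> L / 2 * (lk^2 * (norm gg)^2) + (norm \<Delta>)^2 / (2 * L)"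
    proof -
      have "0 \<le> (L * lk * norm gg - norm \<Delta>)^2" by simp
      hence "2 * L * (lk * (norm \<Delta> * norm gg)) \<le> L^2 * lk^2 * (norm gg)^2 + (norm \<Delta>)^2"
        by (simp add: power2_eq_square algebra_simps)
      thus ?thesis using Lpos by (simp add: field_simps power2_eq_square)
    qed
    have "norm \<Delta> \<le> L * norm (u - xmd k)" unfolding \<Delta>_def gg_def g_def using Lip[where u="xmd k" and v=u] .
    also have "norm (u - xmd k) = (1 - \<alpha> k) * norm (e (k - 1))"
      using mde[OF k] apos[OF k] by (simp add: u_def norm_minus_commute)
    finally have "norm \<Delta> \<le> L * ((1 - \<alpha> k) * norm (e (k - 1)))" .
    hence "(norm \<Delta>)^2 \<le> (L * ((1 - \<alpha> k) * norm (e (k - 1))))^2"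
      by (intro power_mono) auto
    also have "\<dots> = L^2 * ((1 - \<alpha> k)^2 * (norm (e (k - 1)))^2)" by (simp add: power_mult_distrib)
    also have "\<dots> \<le> L^2 * (\<Gamma> k * S (k - 1))" using eprev[OF k] by (intro mult_left_mono) auto
    finally have "(norm \<Delta>)^2 / (2 * L) \<le> L^2 * (\<Gamma> k * S (k - 1)) / (2 * L)"
      using Lpos by (intro divide_right_mono) auto
    also have "\<dots> = L / 2 * (\<Gamma> k * S (k - 1))" using Lpos by (simp add: power2_eq_square)
    finally have d: "(norm \<Delta>)^2 / (2 * L) \<le> L / 2 * (\<Gamma> k * S (k - 1))" .
    have "\<Psi> (x k) \<le> \<Psi> u - lk * (norm gg)^2 + 2 * (L / 2 * (lk^2 * (norm gg)^2)) + L / 2 * (\<Gamma> k * S (k - 1))"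
      using s2 amgm d by linarith
    also have "\<dots> = \<Psi> u - lk * (1 - L * lk) * (norm gg)^2 + L / 2 * (\<Gamma> k * S (k - 1))"
      by (simp add: power2_eq_square algebra_simps)
    finally show ?thesis by (simp add: u_def gg_def lk_def)
  qed
  have tele: "\<Psi> (x N) \<le> \<Psi> x0 - (\<Sum>k=1..N. lam k * (1 - L * lam k) * (norm (g k))^2) + L / 2 * (\<Sum>k=1..N. \<Gamma> k * S (k - 1))" for N
  proof (induction N)
    case 0 then show ?case using x_0 by simp
  next
    case (Suc N)
    then show ?case using stepa[of "Suc N"] by (simp add: algebra_simps)
  qed
  have dbl: "(\<Sum>k=1..N. \<Gamma> k * S (k - 1)) \<le> (\<Sum>k=1..N. a k * (\<Sum>\<tau>=k..N. \<Gamma> \<tau>))" for N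
  proof (induction N)
    case 0 then show ?case by simp
  next
    case (Suc N)
    have c1: "(\<Sum>k=1..Suc N. a k * (\<Sum>\<tau>=k..Suc N. \<Gamma> \<tau>)) = (\<Sum>k=1..Suc N. a k * (\<Sum>\<tau>=k..N. \<Gamma> \<tau>) + a k * \<Gamma> (Suc N))"
      by (rule sum.cong) (auto simp: algebra_simps)
    have c2: "(\<Sum>k=1..Suc N. a k * (\<Sum>\<tau>=k..N. \<Gamma> \<tau>)) = (\<Sum>k=1..N. a k * (\<Sum>\<tau>=k..N. \<Gamma> \<tau>))"
      by simp
    have c3: "(\<Sum>k=1..Suc N. a k * \<Gamma> (Suc N)) = \<Gamma> (Suc N) * S (Suc N)"
      unfolding S_def by (simp add: sum_distrib_right[symmetric] mult.commute)
    have "\<Gamma> (Suc N) * S N \<le> \<Gamma> (Suc N) * S (Suc N)"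
      using Gpos[of "Suc N"] ann[of "Suc N"] by (simp add: SSuc distrib_left)
    then show ?case using Suc c1 c2 c3 by (simp add: sum.distrib)
  qed
  have partA: "?A"
  proof (intro allI impI)
    fix N :: nat assume N: "N \<ge> 1"
    assume Cpos: "\<forall>k\<in>{1..N}. 1 - L * lam k
            - (L * (lam k - \<beta> k)^2 / (2 * \<alpha> k * \<Gamma> k * lam k)) * (\<Sum>\<tau>=k..N. \<Gamma> \<tau>) > 0"
    define C where "C k = 1 - L * lam k
            - (L * (lam k - \<beta> k)^2 / (2 * \<alpha> k * \<Gamma> k * lam k)) * (\<Sum>\<tau>=k..N. \<Gamma> \<tau>)" for k
    have pw: "lam k * C k * (norm (g k))^2 = lam k * (1 - L * lam k) * (norm (g k))^2 - L / 2 * (a k * (\<Sum>\<tau>=k..N. \<Gamma> \<tau>))"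
      if "k \<in> {1..N}" for k
    proof -
      have "lam k > 0" "\<alpha> k > 0" "\<Gamma> k > 0" using that lpos apos Gpos by auto
      thus ?thesis by (simp add: C_def a_def field_simps)
    qed
    have "(\<Sum>k=1..N. lam k * C k * (norm (g k))^2) = (\<Sum>k=1..N. lam k * (1 - L * lam k) * (norm (g k))^2) - L / 2 * (\<Sum>k=1..N. a k * (\<Sum>\<tau>=k..N. \<Gamma> \<tau>))"
      by (simp add: pw sum_subtractf sum_distrib_left)
    also have "\<dots> \<le> \<Psi> x0 - \<Psi> (x N)"
      using tele[of N] dbl[of N] Lpos mult_left_mono[OF dbl[of N], of "L/2"] by linarith
    also have "\<dots> \<le> \<Psi> x0 - (INF z. \<Psi> z)"
      using cINF_lower[OF bdd, of "x N"] by simp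
    finally have T: "(\<Sum>k=1..N. lam k * C k * (norm (g k))^2) \<le> \<Psi> x0 - (INF z. \<Psi> z)" .
    define m where "m = Min ((\<lambda>k. (norm (grad (xmd k)))^2) ` {1..N})"
    have mle: "m \<le> (norm (g k))^2" if "k \<in> {1..N}" for k
      unfolding m_def g_def using that by (intro Min_le) auto
    have lCpos: "lam k * C k > 0" if "k \<in> {1..N}" for k
      using that lpos Cpos by (auto simp: C_def)
    have "m * (\<Sum>k=1..N. lam k * C k) = (\<Sum>k=1..N. lam k * C k * m)"
      by (simp add: sum_distrib_left mult.commute)
    also have "\<dots> \<le> (\<Sum>k=1..N. lam k * C k * (norm (g k))^2)"
      using mle lCpos by (intro sum_mono mult_left_mono) (auto intro: less_imp_le)
    finally have "m * (\<Sum>k=1..N. lam k * C k) \<le> \<Psi> x0 - (INF z. \<Psi> z)" using T by linarith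
    moreover have "(\<Sum>k=1..N. lam k * C k) > 0"
      using lCpos N by (intro sum_pos) auto
    ultimately have "m \<le> (\<Psi> x0 - (INF z. \<Psi> z)) / (\<Sum>k=1..N. lam k * C k)"
      by (simp add: pos_le_divide_eq)
    thus "m \<le> (\<Psi> x0 - (INF z. \<Psi> z)) / (\<Sum>k=1..N. lam k * (1 - L * lam k
                  - (L * (lam k - \<beta> k)^2 / (2 * \<alpha> k * \<Gamma> k * lam k)) * (\<Sum>\<tau>=k..N. \<Gamma> \<tau>)))"
      by (simp add: C_def)
  qed
  have partB: "?B"
  proof (rule impI, rule allI, rule impI, rule impI, rule impI)
    assume cvx: "convex_on UNIV \<Psi>"
    fix xs assume xsmin: "\<forall>z. \<Psi> xs \<le> \<Psi> z"
    assume hb: "\<forall>k\<ge>1. \<alpha> k * lam k \<le> \<beta> k \<and> \<beta> k < 1 / L"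
    assume hm: "\<forall>k\<ge>1. \<alpha> (k + 1) / (lam (k + 1) * \<Gamma> (k + 1)) \<le> \<alpha> k / (lam k * \<Gamma> k)"
    have clb: "\<Psi> u + grad u \<bullet> (v - u) \<le> \<Psi> v" for u v by (rule convex_lb[OF grad cvx])
    define D where "D k = (norm (x k - xs))^2" for k
    have Dnn: "D k \<ge> 0" for k by (simp add: D_def)
    have bLpos: "\<beta> k * (1 - L * \<beta> k) > 0" if "k \<ge> 1" for k
    proof -
      have "\<beta> k < 1 / L" "\<beta> k > 0" using hb that bpos by auto
      hence "L * \<beta> k < 1" using Lpos by (simp add: field_simps)
      thus ?thesis using \<open>\<beta> k > 0\<close> by simp
    qed
    have stepb: "\<Psi> (xag k) - \<Psi> xs \<le> (1 - \<alpha> k) * (\<Psi> (xag (k - 1)) - \<Psi> xs)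
        + \<alpha> k / (2 * lam k) * (D (k - 1) - D k) - \<beta> k * (1 - L * \<beta> k) / 2 * (norm (g k))^2"
      if k: "k \<ge> 1" for k
    proof -
      define md where "md = xmd k"
      define gg where "gg = g k"
      define q where "q = (norm gg)^2"
      define p where "p = gg \<bullet> (x (k - 1) - xs)"
      define ak' where "ak' = \<alpha> k"
      define lk where "lk = lam k"
      define bk where "bk = \<beta> k"
      have lk: "lk > 0" using lpos[OF k] by (simp add: lk_def)
      have a: "0 < ak'" "ak' \<le> 1" using apos[OF k] by (auto simp: ak'_def)
      have qnn: "q \<ge> 0" by (simp add: q_def)
      have hbk: "ak' * lk \<le> bk" using hb k by (simp add: ak'_def lk_def bk_def)
      have ag: "xag k - md = - (bk *\<^sub>R gg)" using xag_def[OF k] by (simp add: md_def bk_def gg_def g_def)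
      have i1: "\<Psi> (xag k) \<le> \<Psi> md + grad md \<bullet> (xag k - md) + L / 2 * (norm (xag k - md))^2" by (rule smooth)
      have "grad md \<bullet> (xag k - md) = - bk * q" unfolding ag
        by (simp add: md_def gg_def g_def q_def power2_norm_eq_inner)
      moreover have "(norm (xag k - md))^2 = bk^2 * q" unfolding ag by (simp add: q_def power_mult_distrib)
      ultimately have i1': "\<Psi> (xag k) \<le> \<Psi> md - bk * q + L / 2 * (bk^2 * q)" using i1 by simp
      have A: "\<Psi> md + gg \<bullet> (xag (k - 1) - md) \<le> \<Psi> (xag (k - 1))"
        using clb[of md "xag (k - 1)"] by (simp add: md_def gg_def g_def)
      have B: "\<Psi> md + gg \<bullet> (xs - md) \<le> \<Psi> xs"
        using clb[of md xs] by (simp add: md_def gg_def g_def)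
      have vid: "(1 - ak') *\<^sub>R (xag (k - 1) - md) + ak' *\<^sub>R (xs - md) = - (ak' *\<^sub>R (x (k - 1) - xs))"
        unfolding md_def xmd_def[OF k] ak'_def by (simp add: algebra_simps)
      have iid: "(1 - ak') * (gg \<bullet> (xag (k - 1) - md)) + ak' * (gg \<bullet> (xs - md)) = - (ak' * p)"
      proof -
        have "gg \<bullet> ((1 - ak') *\<^sub>R (xag (k - 1) - md) + ak' *\<^sub>R (xs - md)) = gg \<bullet> (- (ak' *\<^sub>R (x (k - 1) - xs)))"
          by (simp only: vid)
        thus ?thesis by (simp add: inner_add_right p_def)
      qed
      have A': "(1 - ak') * (\<Psi> md + gg \<bullet> (xag (k - 1) - md)) \<le> (1 - ak') * \<Psi> (xag (k - 1))"
        using A a by (intro mult_left_mono) auto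
      have B': "ak' * (\<Psi> md + gg \<bullet> (xs - md)) \<le> ak' * \<Psi> xs"
        using B a by (intro mult_left_mono) auto
      have comb: "\<Psi> md - ak' * p \<le> (1 - ak') * \<Psi> (xag (k - 1)) + ak' * \<Psi> xs"
        using A' B' iid by (simp add: algebra_simps)
      have xk: "x k - xs = (x (k - 1) - xs) - lk *\<^sub>R gg" using x_def[OF k] by (simp add: lk_def gg_def g_def)
      have Dk: "D k = D (k - 1) - 2 * lk * p + lk^2 * q"
      proof -
        have gen: "(norm (v - lk *\<^sub>R gg))^2 = (norm v)^2 - 2 * lk * (gg \<bullet> v) + lk^2 * (norm gg)^2" for v
          unfolding power2_norm_eq_inner
          by (simp add: inner_diff_left inner_diff_right inner_commute algebra_simps power2_eq_square)
        show ?thesis unfolding D_def xk p_def q_def by (rule gen)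
      qed
      have pid: "ak' * p = ak' / (2 * lk) * (D (k - 1) - D k) + ak' * lk / 2 * q"
        using lk unfolding Dk by (simp add: field_simps power2_eq_square)
      have qb: "ak' * lk / 2 * q \<le> bk / 2 * q" using hbk qnn by (intro mult_right_mono) auto
      have "\<Psi> (xag k) - \<Psi> xs \<le> (1 - ak') * (\<Psi> (xag (k - 1)) - \<Psi> xs) + ak' * p - bk * q + L / 2 * (bk^2 * q)"
        using i1' comb by (simp add: algebra_simps)
      also have "\<dots> \<le> (1 - ak') * (\<Psi> (xag (k - 1)) - \<Psi> xs) + ak' / (2 * lk) * (D (k - 1) - D k) + bk / 2 * q - bk * q + L / 2 * (bk^2 * q)"
        using pid qb by linarith
      also have "\<dots> = (1 - ak') * (\<Psi> (xag (k - 1)) - \<Psi> xs) + ak' / (2 * lk) * (D (k - 1) - D k) - bk * (1 - L * bk) / 2 * q"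
        by (simp add: power2_eq_square field_simps)
      finally show ?thesis by (simp add: ak'_def lk_def bk_def q_def gg_def)
    qed
    define c where "c k = \<alpha> k / (2 * lam k * \<Gamma> k)" for k
    define b where "b k = \<beta> k * (1 - L * \<beta> k) / (2 * \<Gamma> k) * (norm (g k))^2" for k
    have cpos: "c k > 0" if "k \<ge> 1" for k using apos[OF that] lpos[OF that] Gpos[OF that] by (simp add: c_def)
    have bnn: "b k \<ge> 0" if "k \<ge> 1" for k using bLpos[OF that] Gpos[OF that] by (simp add: b_def)
    have teleb: "(\<Psi> (xag N) - \<Psi> xs) / \<Gamma> N + (\<Sum>k=1..N. b k) \<le> c 1 * D 0 - c N * D N" if "N \<ge> 1" for N
      using that
    proof (induction N rule: dec_induct)
      case base
      have "\<Psi> (xag 1) - \<Psi> xs \<le> 1 / (2 * lam 1) * (D 0 - D 1) - \<beta> 1 * (1 - L * \<beta> 1) / 2 * (norm (g 1))^2"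
        using stepb[of 1] a1 by simp
      then show ?case using G1 a1 by (simp add: c_def b_def diff_divide_distrib algebra_simps)
    next
      case (step n)
      have n: "n \<ge> 1" using step by simp
      have Gn: "\<Gamma> n > 0" using Gpos[OF n] .
      have Gs: "\<Gamma> (Suc n) = (1 - \<alpha> (Suc n)) * \<Gamma> n" using Gk[of "Suc n"] n by simp
      have as: "0 < \<alpha> (Suc n)" "\<alpha> (Suc n) < 1" using ak[of "Suc n"] n by auto
      have GS: "\<Gamma> (Suc n) > 0" using Gpos by simp
      have st: "\<Psi> (xag (Suc n)) - \<Psi> xs \<le> (1 - \<alpha> (Suc n)) * (\<Psi> (xag n) - \<Psi> xs)
          + \<alpha> (Suc n) / (2 * lam (Suc n)) * (D n - D (Suc n)) - \<beta> (Suc n) * (1 - L * \<beta> (Suc n)) / 2 * (norm (g (Suc n)))^2"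
        using stepb[of "Suc n"] by simp
      have "(\<Psi> (xag (Suc n)) - \<Psi> xs) / \<Gamma> (Suc n) \<le> ((1 - \<alpha> (Suc n)) * (\<Psi> (xag n) - \<Psi> xs)
          + \<alpha> (Suc n) / (2 * lam (Suc n)) * (D n - D (Suc n)) - \<beta> (Suc n) * (1 - L * \<beta> (Suc n)) / 2 * (norm (g (Suc n)))^2) / \<Gamma> (Suc n)"
        using st GS by (intro divide_right_mono) auto
      also have "\<dots> = (\<Psi> (xag n) - \<Psi> xs) / \<Gamma> n + c (Suc n) * (D n - D (Suc n)) - b (Suc n)"
      proof -
        have r: "(1 - \<alpha> (Suc n)) / \<Gamma> (Suc n) = 1 / \<Gamma> n" using Gs as Gn by simp
        define X where "X = \<Psi> (xag n) - \<Psi> xs"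
        define Y where "Y = \<alpha> (Suc n) / (2 * lam (Suc n)) * (D n - D (Suc n))"
        define Z where "Z = \<beta> (Suc n) * (1 - L * \<beta> (Suc n)) / 2 * (norm (g (Suc n)))^2"
        have "((1 - \<alpha> (Suc n)) * X + Y - Z) / \<Gamma> (Suc n) = (1 - \<alpha> (Suc n)) / \<Gamma> (Suc n) * X + Y / \<Gamma> (Suc n) - Z / \<Gamma> (Suc n)"
          by (simp add: diff_divide_distrib add_divide_distrib times_divide_eq_left[symmetric] del: times_divide_eq_left)
        also have "\<dots> = X / \<Gamma> n + c (Suc n) * (D n - D (Suc n)) - b (Suc n)"
          unfolding r c_def b_def Y_def Z_def by simp
        finally show ?thesis unfolding X_def Y_def Z_def .
      qed
      finally have e1: "(\<Psi> (xag (Suc n)) - \<Psi> xs) / \<Gamma> (Suc n) \<le> (\<Psi> (xag n) - \<Psi> xs) / \<Gamma> n + c (Suc n) * (D n - D (Suc n)) - b (Suc n)" .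
      have hmn: "\<alpha> (Suc n) / (lam (Suc n) * \<Gamma> (Suc n)) \<le> \<alpha> n / (lam n * \<Gamma> n)" using hm n by simp
      have cc: "c k = (\<alpha> k / (lam k * \<Gamma> k)) / 2" for k by (simp add: c_def mult.assoc)
      have "c (Suc n) \<le> c n" unfolding cc using hmn by simp
      hence e2: "c (Suc n) * D n \<le> c n * D n" using Dnn by (intro mult_right_mono) auto
      have e3: "(\<Sum>k=1..Suc n. b k) = (\<Sum>k=1..n. b k) + b (Suc n)" by simp
      show ?case using step.IH e1 e2 e3 by (simp add: algebra_simps)
    qed
    show "\<forall>N\<ge>1. Min ((\<lambda>k. (norm (grad (xmd k)))^2) ` {1..N})
             \<le> (norm (x0 - xs))^2 / (lam 1 * (\<Sum>k=1..N. \<beta> k * (1 - L * \<beta> k) / \<Gamma> k))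
           \<and> \<Psi> (xag N) - \<Psi> xs \<le> \<Gamma> N * (norm (x0 - xs))^2 / (2 * lam 1)"
    proof (intro allI impI conjI)
      fix N :: nat assume N: "N \<ge> 1"
      have l1: "lam 1 > 0" using lpos by simp
      have c1: "c 1 * D 0 = (norm (x0 - xs))^2 / (2 * lam 1)" using a1 G1 x_0 by (simp add: c_def D_def)
      have T: "(\<Psi> (xag N) - \<Psi> xs) / \<Gamma> N + (\<Sum>k=1..N. b k) \<le> (norm (x0 - xs))^2 / (2 * lam 1)"
        using teleb[OF N] cpos[OF N] Dnn[of N] c1 by (smt (verit) mult_nonneg_nonneg)
      have GN: "\<Gamma> N > 0" using Gpos[OF N] .
      have E0: "(\<Psi> (xag N) - \<Psi> xs) / \<Gamma> N \<ge> 0" using xsmin GN by simp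
      have Bs: "(\<Sum>k=1..N. b k) \<ge> 0" using bnn by (intro sum_nonneg) auto
      have "(\<Psi> (xag N) - \<Psi> xs) / \<Gamma> N \<le> (norm (x0 - xs))^2 / (2 * lam 1)" using T Bs by linarith
      thus "\<Psi> (xag N) - \<Psi> xs \<le> \<Gamma> N * (norm (x0 - xs))^2 / (2 * lam 1)"
        using GN by (simp add: pos_divide_le_eq mult.commute)
      define w where "w k = \<beta> k * (1 - L * \<beta> k) / \<Gamma> k" for k
      have wpos: "w k > 0" if "k \<in> {1..N}" for k using that bLpos Gpos by (simp add: w_def)
      define m where "m = Min ((\<lambda>k. (norm (grad (xmd k)))^2) ` {1..N})"
      have mle: "m \<le> (norm (g k))^2" if "k \<in> {1..N}" for k
        unfolding m_def g_def using that by (intro Min_le) auto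
      have "m * (\<Sum>k=1..N. w k) = (\<Sum>k=1..N. w k * m)"
        by (simp add: sum_distrib_left mult.commute)
      also have "\<dots> \<le> (\<Sum>k=1..N. w k * (norm (g k))^2)"
        using mle wpos by (intro sum_mono mult_left_mono) (auto intro: less_imp_le)
      also have "\<dots> = 2 * (\<Sum>k=1..N. b k)"
        by (simp add: sum_distrib_left w_def b_def)
      also have "\<dots> \<le> (norm (x0 - xs))^2 / lam 1" using T E0 by (simp add: field_simps)
      finally have mw: "m * (\<Sum>k=1..N. w k) \<le> (norm (x0 - xs))^2 / lam 1" .
      have wsum: "(\<Sum>k=1..N. w k) > 0" using wpos N by (intro sum_pos) auto
      have "m * (lam 1 * (\<Sum>k=1..N. w k)) \<le> (norm (x0 - xs))^2"
        using mw l1 by (simp add: field_simps)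
      hence "m \<le> (norm (x0 - xs))^2 / (lam 1 * (\<Sum>k=1..N. w k))"
        using wsum l1 by (simp add: pos_le_divide_eq)
      thus "Min ((\<lambda>k. (norm (grad (xmd k)))^2) ` {1..N}) \<le> (norm (x0 - xs))^2 / (lam 1 * (\<Sum>k=1..N. \<beta> k * (1 - L * \<beta> k) / \<Gamma> k))"
        by (simp add: w_def m_def)
    qed
  qed
  show ?thesis by (rule conjI[OF partA partB])
qed

end
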